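(* Let $m,n\in\mathbb{N}$, $R>0$ and $\varepsilon\in\mathbb{R}$ with $|\varepsilon|\ll_{m,n}R^{-1}$. Let $\xi:=(1+\varepsilon u)(1-\varepsilon v)$ and define $\bar\Phi:\mathfrak{D}\cap\{r<R\}\to\mathfrak{D}$ in null coordinates by \[ \bar\Phi(u,v,\omega_x,\omega_t):=\big(u(1+\varepsilon u)^{-1},\ v(1-\varepsilon v)^{-1},\ \omega_x,\ \omega_t\big). \] Then $\tau\circ\bar\Phi=\xi^{-1}\tau$, $f\circ\bar\Phi=\xi^{-1}f$, $\bar\rho\circ\bar\Phi=\xi^{-1}r$, and $\bar\Phi$ is a conformal isometry between $\mathfrak{D}\cap\{r<R\}$ and an open subset of $\mathfrak{D}$; specifically, the pull-back satisfies $\bar\Phi^*\bar g=\xi^{-2}g$ on $\mathfrak{D}\cap\{r<R\}$.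
   Context: On $\mathbb{R}^{m+n}$ with Cartesian coordinates $t\in\mathbb{R}^m$, $x\in\mathbb{R}^n$: $g=-\sum dt_i^2+\sum dx_j^2$, $r=|x|$, $\tau=|t|$, $u=\frac12(\tau-r)$, $v=\frac12(\tau+r)$, $f=-uv=\frac14(|x|^2-|t|^2)$, $\mathfrak{D}=\{f>0\}$; null coordinates $(u,v,\omega_x,\omega_t)$ with $\omega_x=x/|x|\in\mathbb{S}^{n-1}$, $\omega_t=t/|t|\in\mathbb{S}^{m-1}$, in which $g=-4\,du\,dv+r^2\mathring\gamma_{\mathbb{S}^{n-1}}-\tau^2\mathring\gamma_{\mathbb{S}^{m-1}}$. The warped radius is $\bar\rho=r+2\varepsilon f$ and the $\varepsilon$-warped metric is $\bar g=-4\,du\,dv+\bar\rho^2\mathring\gamma_{\mathbb{S}^{n-1}}-\tau^2\mathring\gamma_{\mathbb{S}^{m-1}}$. The notation $|\varepsilon|\ll_{m,n}R^{-1}$ means $|\varepsilon|\le cR^{-1}$ for a sufficiently small constant $c$ depending on $m,n$. *)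

theory Defs
  imports "HOL-Analysis.Analysis"
begin

text \<open>Points of R^(m+n) are pairs (t, x) with t in R^m, x in R^n.
  The dimensions m, n are the cardinalities of the finite index types 'm, 'n.\<close>

type_synonym ('m, 'n) pt = "(real ^ 'm) \<times> (real ^ 'n)"

definition tau :: "('m::finite, 'n::finite) pt \<Rightarrow> real" where
  "tau p = norm (fst p)"

definition rr :: "('m::finite, 'n::finite) pt \<Rightarrow> real" where
  "rr p = norm (snd p)"

definition uu :: "('m::finite, 'n::finite) pt \<Rightarrow> real" where
  "uu p = (tau p - rr p) / 2"

definition vv :: "('m::finite, 'n::finite) pt \<Rightarrow> real" where
  "vv p = (tau p + rr p) / 2"

definition ff :: "('m::finite, 'n::finite) pt \<Rightarrow> real" where
  "ff p = - (uu p * vv p)"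

definition DD :: "('m::finite, 'n::finite) pt set" where
  "DD = {p. ff p > 0}"

definition omega_x :: "('m::finite, 'n::finite) pt \<Rightarrow> real ^ 'n" where
  "omega_x p = sgn (snd p)"

definition omega_t :: "('m::finite, 'n::finite) pt \<Rightarrow> real ^ 'm" where
  "omega_t p = sgn (fst p)"

text \<open>Inverse of the null coordinate chart: (u, v, omega_x, omega_t) gives
  t = tau * omega_t, x = r * omega_x with tau = u + v, r = v - u.\<close>
definition from_null :: "real \<Rightarrow> real \<Rightarrow> real ^ 'n \<Rightarrow> real ^ 'm \<Rightarrow> ('m::finite, 'n::finite) pt" where
  "from_null u v wx wt = ((u + v) *\<^sub>R wt, (v - u) *\<^sub>R wx)"

definition rhobar :: "real \<Rightarrow> ('m::finite, 'n::finite) pt \<Rightarrow> real" where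
  "rhobar \<epsilon> p = rr p + 2 * \<epsilon> * ff p"

definition xi :: "real \<Rightarrow> ('m::finite, 'n::finite) pt \<Rightarrow> real" where
  "xi \<epsilon> p = (1 + \<epsilon> * uu p) * (1 - \<epsilon> * vv p)"

definition Phibar :: "real \<Rightarrow> ('m::finite, 'n::finite) pt \<Rightarrow> ('m, 'n) pt" where
  "Phibar \<epsilon> p = from_null (uu p / (1 + \<epsilon> * uu p)) (vv p / (1 - \<epsilon> * vv p))
                            (omega_x p) (omega_t p)"

definition gmink :: "('m::finite, 'n::finite) pt \<Rightarrow> ('m, 'n) pt \<Rightarrow> real" where
  "gmink w w' = - (fst w \<bullet> fst w') + snd w \<bullet> snd w'"

text \<open>Differentials at the point p (with x \<noteq> 0) of r and of omega_x, applied to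
  the x-component b of a tangent vector.\<close>
definition dr :: "('m::finite, 'n::finite) pt \<Rightarrow> real ^ 'n \<Rightarrow> real" where
  "dr p b = (snd p \<bullet> b) / rr p"

definition domega_x :: "('m::finite, 'n::finite) pt \<Rightarrow> real ^ 'n \<Rightarrow> real ^ 'n" where
  "domega_x p b = (1 / rr p) *\<^sub>R (b - (omega_x p \<bullet> b) *\<^sub>R omega_x p)"

text \<open>The epsilon-warped metric
   gbar = -4 du dv + rhobar^2 gamma_{S^{n-1}} - tau^2 gamma_{S^{m-1}},
  written in Cartesian coordinates: -4 du dv - tau^2 gamma_{S^{m-1}} = -|dt|^2 + dr^2
  (polar coordinates in t), and gamma_{S^{n-1}} is the round metric (induced from
  the ambient inner product) pulled back by omega_x.\<close>
definition gbar :: "real \<Rightarrow> ('m::finite, 'n::finite) pt \<Rightarrow> ('m, 'n) pt \<Rightarrow> ('m, 'n) pt \<Rightarrow> real" where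
  "gbar \<epsilon> p w w' =
     - (fst w \<bullet> fst w') + dr p (snd w) * dr p (snd w')
     + (rhobar \<epsilon> p)\<^sup>2 * (domega_x p (snd w) \<bullet> domega_x p (snd w'))"

end

theory Submission
  imports Defs
begin

lemma ff_eq: "ff p = (snd p \<bullet> snd p - fst p \<bullet> fst p) / 4"
  unfolding ff_def uu_def vv_def tau_def rr_def
  by (simp add: power2_norm_eq_inner[symmetric] field_simps power2_eq_square)

lemma xi_eq: "xi \<epsilon> p = 1 - \<epsilon> * rr p + \<epsilon>\<^sup>2 * ff p"
  unfolding xi_def ff_def uu_def vv_def
  by (simp add: field_simps power2_eq_square)

lemma D_rr:
  assumes "snd p \<noteq> 0"
  shows "(rr has_derivative (\<lambda>w. dr p (snd w))) (at p)"
proof -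
  have "((\<lambda>p. norm (snd p)) has_derivative (\<lambda>w. snd w \<bullet> sgn (snd p))) (at p)"
    using has_derivative_compose[OF has_derivative_snd[OF has_derivative_ident] has_derivative_norm[OF assms]]
    by (simp add: o_def)
  then show ?thesis
    unfolding rr_def[abs_def] dr_def
    by (simp add: sgn_div_norm inner_commute divide_inverse rr_def mult.commute)
qed

lemma D_ff:
  "(ff has_derivative (\<lambda>w. (snd p \<bullet> snd w - fst p \<bullet> fst w) / 2)) (at p)"
  unfolding ff_eq[abs_def]
  by (auto intro!: derivative_eq_intros simp: inner_commute field_simps)

definition "dff p w = (snd p \<bullet> snd w - fst p \<bullet> fst w) / 2"
definition "dxi \<epsilon> p w = - \<epsilon> * dr p (snd w) + \<epsilon>\<^sup>2 * dff p w"
definition "HH \<epsilon> p = rr p - 2 * \<epsilon> * ff p"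
definition "dHH \<epsilon> p w = dr p (snd w) - 2 * \<epsilon> * dff p w"
definition "k1 \<epsilon> p = 1 / xi \<epsilon> p"
definition "dk1 \<epsilon> p w = - dxi \<epsilon> p w / (xi \<epsilon> p)\<^sup>2"
definition "k2 \<epsilon> p = HH \<epsilon> p / (xi \<epsilon> p * rr p)"
definition "dk2 \<epsilon> p w = (dHH \<epsilon> p w * (xi \<epsilon> p * rr p)
   - HH \<epsilon> p * (dxi \<epsilon> p w * rr p + xi \<epsilon> p * dr p (snd w))) / (xi \<epsilon> p * rr p)\<^sup>2"
definition "Phi2 \<epsilon> p = (k1 \<epsilon> p *\<^sub>R fst p, k2 \<epsilon> p *\<^sub>R snd p)"
definition "DPhi \<epsilon> p w = (k1 \<epsilon> p *\<^sub>R fst w + dk1 \<epsilon> p w *\<^sub>R fst p,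
                          k2 \<epsilon> p *\<^sub>R snd w + dk2 \<epsilon> p w *\<^sub>R snd p)"

lemma D_xi:
  assumes "snd p \<noteq> 0"
  shows "(xi \<epsilon> has_derivative dxi \<epsilon> p) (at p)"
proof -
  have "((\<lambda>p. 1 - \<epsilon> * rr p + \<epsilon>\<^sup>2 * ff p) has_derivative dxi \<epsilon> p) (at p)"
    unfolding dxi_def[abs_def] dff_def
    by (auto intro!: derivative_eq_intros D_rr[OF assms] D_ff)
  then show ?thesis unfolding xi_eq[abs_def] .
qed

lemma D_HH:
  assumes "snd p \<noteq> 0"
  shows "(HH \<epsilon> has_derivative dHH \<epsilon> p) (at p)"
  unfolding HH_def[abs_def] dHH_def[abs_def] dff_def
  by (auto intro!: derivative_eq_intros D_rr[OF assms] D_ff)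

lemma D_k1:
  assumes "snd p \<noteq> 0" "xi \<epsilon> p \<noteq> 0"
  shows "(k1 \<epsilon> has_derivative dk1 \<epsilon> p) (at p)"
  unfolding k1_def[abs_def] dk1_def[abs_def]
  using assms
  by (auto intro!: derivative_eq_intros D_xi[OF assms(1)] simp: field_simps power2_eq_square)

lemma D_k2:
  assumes "snd p \<noteq> 0" "xi \<epsilon> p \<noteq> 0"
  shows "(k2 \<epsilon> has_derivative dk2 \<epsilon> p) (at p)"
proof -
  have "rr p \<noteq> 0" using assms by (simp add: rr_def)
  then show ?thesis
  unfolding k2_def[abs_def] dk2_def[abs_def]
  using assms
  by (auto intro!: derivative_eq_intros D_xi[OF assms(1)] D_HH[OF assms(1)] D_rr[OF assms(1)] simp: field_simps power2_eq_square)
qed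

lemma D_Phi2:
  assumes "snd p \<noteq> 0" "xi \<epsilon> p \<noteq> 0"
  shows "(Phi2 \<epsilon> has_derivative DPhi \<epsilon> p) (at p)"
  unfolding Phi2_def[abs_def] DPhi_def[abs_def]
  by (auto intro!: derivative_eq_intros D_k1[OF assms] D_k2[OF assms])

lemma ff_tr: "ff p = ((rr p)\<^sup>2 - (tau p)\<^sup>2) / 4"
  unfolding ff_def uu_def vv_def by (simp add: field_simps power2_eq_square)

lemma basic:
  assumes "p \<in> DD" "\<bar>\<epsilon>\<bar> * rr p \<le> 1/4"
  shows "0 \<le> tau p" "tau p < rr p" "0 < rr p" "snd p \<noteq> 0" "ff p > 0"
    "1 + \<epsilon> * uu p > 0" "1 - \<epsilon> * vv p > 0" "xi \<epsilon> p > 0" "HH \<epsilon> p > 0"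
proof -
  have t0: "0 \<le> tau p" by (simp add: tau_def)
  have r0: "0 \<le> rr p" by (simp add: rr_def)
  have f0: "ff p > 0" using assms(1) by (simp add: DD_def)
  then have "(tau p)\<^sup>2 < (rr p)\<^sup>2" by (simp add: ff_tr)
  then have tr: "tau p < rr p" using t0 r0 by (meson power_less_imp_less_base)
  then have rp: "0 < rr p" using t0 by linarith
  show "0 \<le> tau p" "tau p < rr p" "0 < rr p" "ff p > 0" by fact+
  show "snd p \<noteq> 0" using rp by (auto simp: rr_def)
  have "\<bar>uu p\<bar> \<le> rr p / 2" using t0 tr by (simp add: uu_def)
  then have "\<bar>\<epsilon>\<bar> * \<bar>uu p\<bar> \<le> \<bar>\<epsilon>\<bar> * (rr p / 2)" by (rule mult_left_mono) simp
  then have "\<bar>\<epsilon> * uu p\<bar> \<le> 1/8" using assms(2) by (simp add: abs_mult)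
  then show u1: "1 + \<epsilon> * uu p > 0" by linarith
  have "\<bar>vv p\<bar> \<le> rr p" using t0 tr by (simp add: vv_def)
  then have "\<bar>\<epsilon>\<bar> * \<bar>vv p\<bar> \<le> \<bar>\<epsilon>\<bar> * rr p" by (simp add: mult_left_mono)
  then have "\<bar>\<epsilon> * vv p\<bar> \<le> 1/4" using assms(2) by (simp add: abs_mult)
  then show v1: "1 - \<epsilon> * vv p > 0" by linarith
  show "xi \<epsilon> p > 0" using u1 v1 by (simp add: xi_def)
  have "ff p \<le> (rr p)\<^sup>2 / 4" by (simp add: ff_tr)
  then have "\<bar>\<epsilon>\<bar> * ff p \<le> \<bar>\<epsilon>\<bar> * ((rr p)\<^sup>2 / 4)" by (rule mult_left_mono) simp
  also have "\<dots> = (\<bar>\<epsilon>\<bar> * rr p) * rr p / 4" by (simp add: power2_eq_square)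
  also have "\<dots> \<le> (1/4) * rr p / 4" using assms(2) r0 by (intro divide_right_mono mult_right_mono) auto
  finally have "\<bar>2 * \<epsilon> * ff p\<bar> \<le> rr p / 8" using f0 by (simp add: abs_mult)
  then show "HH \<epsilon> p > 0" using rp by (simp add: HH_def)
qed

lemma hdiv: "((A::real)/D - B/D)/2 = ((A-B)/2)/D" "((A::real)/D + B/D)/2 = ((A+B)/2)/D"
  by (cases "D=0", simp_all add: field_simps)+

lemma scal_u:
  fixes e u v :: real
  assumes "1 + e*u \<noteq> 0" "1 - e * v \<noteq> 0"
  shows "((u+v)/((1+e*u)*(1-e * v)) - (v-u+2*e*u * v)/((1+e*u)*(1-e * v)))/2 = u/(1+e*u)"
proof -
  have eq2: "((u+v) - (v-u+2*e*u * v))/2 = u * (1 - e * v)" by (simp add: field_simps)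
  have eq3: "u * (1 - e * v) / ((1+e*u)*(1-e * v)) = u/(1+e*u)" using assms(2) by simp
  show ?thesis unfolding hdiv eq2 by (rule eq3)
qed

lemma scal_v:
  fixes e u v :: real
  assumes "1 + e*u \<noteq> 0" "1 - e * v \<noteq> 0"
  shows "((u+v)/((1+e*u)*(1-e * v)) + (v-u+2*e*u * v)/((1+e*u)*(1-e * v)))/2 = v/(1-e * v)"
proof -
  have eq2: "((u+v) + (v-u+2*e*u * v))/2 = v * (1 + e * u)" by (simp add: field_simps)
  have eq3: "v * (1 + e * u) / ((1+e*u)*(1-e * v)) = v/(1-e * v)" using assms(1) by simp
  show ?thesis unfolding hdiv eq2 by (rule eq3)
qed

lemma good:
  assumes "p \<in> DD" "\<bar>\<epsilon>\<bar> * rr p \<le> 1/4"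
  shows "Phibar \<epsilon> p = Phi2 \<epsilon> p"
    "tau (Phi2 \<epsilon> p) = tau p / xi \<epsilon> p"
    "rr (Phi2 \<epsilon> p) = HH \<epsilon> p / xi \<epsilon> p"
    "ff (Phi2 \<epsilon> p) = ff p / xi \<epsilon> p"
    "uu (Phi2 \<epsilon> p) = uu p / (1 + \<epsilon> * uu p)"
    "vv (Phi2 \<epsilon> p) = vv p / (1 - \<epsilon> * vv p)"
proof -
  note b = basic[OF assms]
  have xe: "xi \<epsilon> p = (1 + \<epsilon> * uu p) * (1 - \<epsilon> * vv p)" by (simp add: xi_def)
  have tuv: "tau p = uu p + vv p" by (simp add: uu_def vv_def field_simps)
  have Huv: "HH \<epsilon> p = vv p - uu p + 2 * \<epsilon> * uu p * vv p" by (simp add: uu_def vv_def HH_def ff_def field_simps)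
  have s1: "uu p / (1 + \<epsilon> * uu p) + vv p / (1 - \<epsilon> * vv p) = tau p / xi \<epsilon> p"
    using b(6,7) unfolding xe tuv by (simp add: field_simps)
  have s2: "vv p / (1 - \<epsilon> * vv p) - uu p / (1 + \<epsilon> * uu p) = HH \<epsilon> p / xi \<epsilon> p"
    using b(6,7) unfolding xe Huv by (simp add: field_simps)
  have f1: "(tau p / xi \<epsilon> p) *\<^sub>R sgn (fst p) = k1 \<epsilon> p *\<^sub>R fst p"
    by (cases "fst p = 0") (auto simp: tau_def sgn_div_norm k1_def)
  have f2: "(HH \<epsilon> p / xi \<epsilon> p) *\<^sub>R sgn (snd p) = k2 \<epsilon> p *\<^sub>R snd p"
    using b(3) by (auto simp: rr_def sgn_div_norm k2_def field_simps)
  show "Phibar \<epsilon> p = Phi2 \<epsilon> p"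
    unfolding Phibar_def from_null_def Phi2_def omega_x_def omega_t_def s1 s2 f1 f2 ..
  show t: "tau (Phi2 \<epsilon> p) = tau p / xi \<epsilon> p"
    using b(8) by (simp add: Phi2_def tau_def k1_def)
  show r: "rr (Phi2 \<epsilon> p) = HH \<epsilon> p / xi \<epsilon> p"
    using b(8,9,3) by (simp add: Phi2_def rr_def k2_def)
  have id: "(HH \<epsilon> p)\<^sup>2 - (tau p)\<^sup>2 = 4 * ff p * xi \<epsilon> p"
    unfolding HH_def ff_def xi_def uu_def vv_def by (simp add: field_simps power2_eq_square)
  show "ff (Phi2 \<epsilon> p) = ff p / xi \<epsilon> p"
  proof -
    have "ff (Phi2 \<epsilon> p) = ((HH \<epsilon> p)\<^sup>2 - (tau p)\<^sup>2) / (4 * (xi \<epsilon> p)\<^sup>2)"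
      unfolding ff_tr[of "Phi2 \<epsilon> p"] t r by (simp add: power_divide diff_divide_distrib)
    also have "\<dots> = ff p / xi \<epsilon> p" unfolding id using b(8) by (simp add: power2_eq_square)
    finally show ?thesis .
  qed
  show "uu (Phi2 \<epsilon> p) = uu p / (1 + \<epsilon> * uu p)"
    unfolding uu_def[of "Phi2 \<epsilon> p"] t r xe Huv tuv using b(6,7)
    by (intro scal_u) auto
  show "vv (Phi2 \<epsilon> p) = vv p / (1 - \<epsilon> * vv p)"
    unfolding vv_def[of "Phi2 \<epsilon> p"] t r xe Huv tuv using b(6,7)
    by (intro scal_v) auto
qed

lemma poly_id:
  fixes e r s a a' b b' :: real
  defines "F \<equiv> (r^2 - s)/4"
  defines "X \<equiv> 1 - e*r + e^2*F"
  defines "H \<equiv> r - 2*e*F"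
  defines "dx \<equiv> -e*b + e^2*(r*b - a)/2"
  defines "dx' \<equiv> -e*b' + e^2*(r*b' - a')/2"
  defines "dh \<equiv> b - e*(r*b - a)"
  defines "dh' \<equiv> b' - e*(r*b' - a')"
  shows "X*(dx'*a + dx*a') - dx*dx'* s + (dh*X - H*dx)*(dh'*X - H*dx') = b*b'*X^2"
  unfolding F_def X_def H_def dx_def dx'_def dh_def dh'_def
  by (simp add: field_simps power2_eq_square power3_eq_cube)

lemma final_scalar:
  fixes e r s ta ta' be be' A B X H dx dx' dh dh' k1 k2 dk1 dk1' dk2 dk2' :: real
  assumes r: "r > 0" and X0: "X \<noteq> 0" and H0: "H \<noteq> 0"
  and P: "X*(dx'*ta + dx*ta') - dx*dx'* s + (dh*X - H*dx)*(dh'*X - H*dx') = be*be'*X^2"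
  and k1: "k1 = 1/X" and dk1: "dk1 = - dx / X^2" and dk1': "dk1' = - dx' / X^2"
  and k2: "k2 = H/(X*r)"
  and dk2: "dk2 = (dh*(X*r) - H*(dx*r + X*be))/(X*r)^2"
  and dk2': "dk2' = (dh'*(X*r) - H*(dx'*r + X*be'))/(X*r)^2"
  shows "-(k1^2*A + k1*dk1'*ta + k1*dk1*ta' + dk1*dk1'* s)
     + ((k2*(r*be) + dk2*r^2)/r) * ((k2*(r*be') + dk2'*r^2)/r)
     + (r/X)^2 * ((1/(k2*r))^2 * ((k2^2*B + k2*dk2'*(r*be) + k2*dk2*(r*be') + dk2*dk2'*r^2)
          - ((k2*(r*be) + dk2*r^2)/r) * ((k2*(r*be') + dk2'*r^2)/r)))
     = (-A + B)/X^2"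
proof -
  have Dr: "(k2*(r*be) + dk2*r^2)/r = k2*be + dk2*r" "(k2*(r*be') + dk2'*r^2)/r = k2*be' + dk2'*r"
    using r by (simp_all add: field_simps power2_eq_square)
  have D: "k2*be + dk2*r = (dh*X - H*dx)/X^2" "k2*be' + dk2'*r = (dh'*X - H*dx')/X^2"
    unfolding k2 dk2 dk2' using r X0 by (simp_all add: field_simps power2_eq_square)
  have ang: "(k2^2*B + k2*dk2'*(r*be) + k2*dk2*(r*be') + dk2*dk2'*r^2)
          - (k2*be + dk2*r) * (k2*be' + dk2'*r) = k2^2 * (B - be*be')"
    by (simp add: algebra_simps power2_eq_square)
  have k20: "k2 \<noteq> 0" unfolding k2 using r X0 H0 by simp
  have c: "(r/X)^2 * (1/(k2*r))^2 * k2^2 = 1/X^2"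
    using k20 r X0 by (simp add: field_simps power2_eq_square)
  have time: "k1^2*A + k1*dk1'*ta + k1*dk1*ta' + dk1*dk1' * s
      = A/X^2 - (X*(dx'*ta + dx*ta') - dx*dx'* s)/X^4"
    unfolding k1 dk1 dk1' using X0 by (simp add: field_simps power2_eq_square power4_eq_xxxx)
  have DD: "((dh*X - H*dx)/X^2) * ((dh'*X - H*dx')/X^2) = (dh*X - H*dx)*(dh'*X - H*dx')/X^4"
    by (simp add: power2_eq_square power4_eq_xxxx)
  have last: "(X*(dx'*ta + dx*ta') - dx*dx'* s)/X^4 + (dh*X - H*dx)*(dh'*X - H*dx')/X^4
     = be*be'/X^2"
    unfolding add_divide_distrib[symmetric] add_diff_eq[symmetric] 
    using P X0 by (simp add: field_simps power2_eq_square power4_eq_xxxx)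
  have angc: "(r/X)^2 * ((1/(k2*r))^2 * ((k2^2*B + k2*dk2'*(r*be) + k2*dk2*(r*be') + dk2*dk2'*r^2)
          - (k2*be + dk2*r) * (k2*be' + dk2'*r))) = (B - be*be')/X^2"
  proof -
    have "(r/X)^2 * ((1/(k2*r))^2 * ((k2^2*B + k2*dk2'*(r*be) + k2*dk2*(r*be') + dk2*dk2'*r^2)
          - (k2*be + dk2*r) * (k2*be' + dk2'*r))) = ((r/X)^2 * (1/(k2*r))^2 * k2^2) * (B - be*be')"
      unfolding ang by (simp only: mult.assoc)
    then show ?thesis unfolding c by simp
  qed
  show ?thesis
    unfolding Dr time angc unfolding D DD
    using last X0 by (simp add: field_simps)
qed

lemma dom_gen:
  fixes y Y Y' :: "'a::real_inner"
  assumes "y \<noteq> 0"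
  shows "((1/c) *\<^sub>R (Y - (sgn y \<bullet> Y) *\<^sub>R sgn y)) \<bullet> ((1/c) *\<^sub>R (Y' - (sgn y \<bullet> Y') *\<^sub>R sgn y))
     = (1/c)^2 * (Y \<bullet> Y' - ((y \<bullet> Y)/norm y) * ((y \<bullet> Y')/norm y))"
proof -
  have "sgn y \<bullet> sgn y = (norm (sgn y))^2" by (simp add: power2_norm_eq_inner)
  then have ss: "sgn y \<bullet> sgn y = 1" using assms by (simp add: norm_sgn)
  have sY: "\<And>Z. sgn y \<bullet> Z = (y \<bullet> Z)/norm y" by (simp add: sgn_div_norm divide_inverse)
  have n0: "norm y \<noteq> 0" using assms by simp
  have ys: "y \<bullet> sgn y = norm y" using n0 by (simp add: sgn_div_norm dot_square_norm power2_eq_square)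
  show ?thesis
    using n0 by (simp add: ys inner_diff_left inner_diff_right ss inner_commute[of Y "sgn y"] power2_eq_square sY algebra_simps)
qed

lemma metric:
  assumes "p \<in> DD" "\<bar>\<epsilon>\<bar> * rr p \<le> 1/4"
  shows "gbar \<epsilon> (Phi2 \<epsilon> p) (DPhi \<epsilon> p w) (DPhi \<epsilon> p w') = gmink w w' / (xi \<epsilon> p)\<^sup>2"
proof -
  note b = basic[OF assms]
  note g = good[OF assms]
  let ?q = "Phi2 \<epsilon> p"
  let ?r = "rr p"
  let ?X = "xi \<epsilon> p"
  let ?be = "dr p (snd w)" and ?be' = "dr p (snd w')"
  let ?ta = "fst p \<bullet> fst w" and ?ta' = "fst p \<bullet> fst w'" and ?s = "fst p \<bullet> fst p"
  let ?A = "fst w \<bullet> fst w'" and ?B = "snd w \<bullet> snd w'"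
  have k2p: "k2 \<epsilon> p > 0" using b by (simp add: k2_def)
  have sq: "snd ?q = k2 \<epsilon> p *\<^sub>R snd p" by (simp add: Phi2_def)
  have rrq: "rr ?q = k2 \<epsilon> p * ?r" using k2p by (simp add: sq rr_def)
  have omq: "sgn (snd ?q) = sgn (snd p)" using k2p by (simp add: sq sgn_scaleR)
  have rhoq: "rhobar \<epsilon> ?q = ?r / ?X"
    unfolding rhobar_def g(3) g(4) HH_def by (simp add: diff_divide_distrib)
  have xb: "\<And>b. snd p \<bullet> b = ?r * dr p b" using b(3) by (simp add: dr_def)
  have xx: "snd p \<bullet> snd p = ?r^2" by (simp add: rr_def dot_square_norm)
  have xX: "\<And>w. snd p \<bullet> snd (DPhi \<epsilon> p w) = k2 \<epsilon> p * (?r * dr p (snd w)) + dk2 \<epsilon> p w * ?r^2"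
    by (simp add: DPhi_def inner_add_right xb[symmetric] xx)
  have hdr: "\<And>w. dr ?q (snd (DPhi \<epsilon> p w)) = (k2 \<epsilon> p * (?r * dr p (snd w)) + dk2 \<epsilon> p w * ?r^2) / ?r"
    unfolding dr_def[of ?q] rrq sq using k2p by (simp add: xX)
  have hT: "fst (DPhi \<epsilon> p w) \<bullet> fst (DPhi \<epsilon> p w') =
     (k1 \<epsilon> p)^2 * ?A + k1 \<epsilon> p * dk1 \<epsilon> p w' * ?ta + k1 \<epsilon> p * dk1 \<epsilon> p w * ?ta' + dk1 \<epsilon> p w * dk1 \<epsilon> p w' * ?s"
    by (simp add: DPhi_def inner_add_left inner_add_right inner_commute[of "fst w" "fst p"] power2_eq_square algebra_simps)
  have hXX: "snd (DPhi \<epsilon> p w) \<bullet> snd (DPhi \<epsilon> p w') =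
     (k2 \<epsilon> p)^2 * ?B + k2 \<epsilon> p * dk2 \<epsilon> p w' * (?r * ?be) + k2 \<epsilon> p * dk2 \<epsilon> p w * (?r * ?be') + dk2 \<epsilon> p w * dk2 \<epsilon> p w' * ?r^2"
    by (simp add: DPhi_def inner_add_left inner_add_right inner_commute[of "snd w" "snd p"] xb[symmetric] xx power2_eq_square algebra_simps)
  have hdom: "domega_x ?q (snd (DPhi \<epsilon> p w)) \<bullet> domega_x ?q (snd (DPhi \<epsilon> p w')) =
      (1/(k2 \<epsilon> p * ?r))^2 * (((k2 \<epsilon> p)^2 * ?B + k2 \<epsilon> p * dk2 \<epsilon> p w' * (?r * ?be) + k2 \<epsilon> p * dk2 \<epsilon> p w * (?r * ?be') + dk2 \<epsilon> p w * dk2 \<epsilon> p w' * ?r^2)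
        - ((k2 \<epsilon> p * (?r * ?be) + dk2 \<epsilon> p w * ?r^2) / ?r) * ((k2 \<epsilon> p * (?r * ?be') + dk2 \<epsilon> p w' * ?r^2) / ?r))"
    unfolding domega_x_def omega_x_def omq rrq
    unfolding dom_gen[OF b(4)] hXX xX by (simp add: rr_def)
  have e1: "?X = 1 - \<epsilon>*?r + \<epsilon>^2*((?r^2 - ?s)/4)"
    unfolding xi_eq ff_tr by (simp add: tau_def dot_square_norm)
  have e2: "HH \<epsilon> p = ?r - 2*\<epsilon>*((?r^2 - ?s)/4)"
    unfolding HH_def ff_tr by (simp add: tau_def dot_square_norm)
  have e3: "\<And>w. dxi \<epsilon> p w = -\<epsilon>*dr p (snd w) + \<epsilon>^2*(?r*dr p (snd w) - fst p \<bullet> fst w)/2"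
    unfolding dxi_def dff_def xb by simp
  have e4: "\<And>w. dHH \<epsilon> p w = dr p (snd w) - \<epsilon>*(?r*dr p (snd w) - fst p \<bullet> fst w)"
    unfolding dHH_def dff_def xb by simp
  have P: "?X*(dxi \<epsilon> p w'*?ta + dxi \<epsilon> p w*?ta') - dxi \<epsilon> p w*dxi \<epsilon> p w'* ?s
     + (dHH \<epsilon> p w*?X - HH \<epsilon> p*dxi \<epsilon> p w)*(dHH \<epsilon> p w'*?X - HH \<epsilon> p*dxi \<epsilon> p w') = ?be*?be'*?X^2"
    unfolding e1 e2 e3 e4 by (rule poly_id)
  have "gbar \<epsilon> ?q (DPhi \<epsilon> p w) (DPhi \<epsilon> p w') = (- ?A + ?B) / ?X^2"
    unfolding gbar_def hT hdr hdom rhoq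
    apply (rule final_scalar[where H="HH \<epsilon> p" and dh="dHH \<epsilon> p w" and dh'="dHH \<epsilon> p w'"
       and dx="dxi \<epsilon> p w" and dx'="dxi \<epsilon> p w'"])
    using b P by (auto simp: k1_def dk1_def k2_def dk2_def)
  then show ?thesis by (simp add: gmink_def)
qed

lemma cancel_u:
  fixes e a b :: real
  assumes "1 + e*a > 0" "1 + e*b > 0" "a/(1+e*a) = b/(1+e*b)"
  shows "a = b"
proof -
  have h: "a*(1+e*b) = b*(1+e*a)" using assms(3) assms(1,2)
    by (metis (no_types, lifting) frac_eq_eq less_irrefl)
  have "a*(1+e*b) - b*(1+e*a) = a - b" by (simp add: algebra_simps)
  then show ?thesis using h by simp
qed

lemma rho_good:
  assumes "p \<in> DD" "\<bar>\<epsilon>\<bar> * rr p \<le> 1/4"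
  shows "rhobar \<epsilon> (Phi2 \<epsilon> p) = rr p / xi \<epsilon> p"
  unfolding rhobar_def good(3)[OF assms] good(4)[OF assms] HH_def by (simp add: diff_divide_distrib)

lemma inj_good:
  assumes "p \<in> DD" "\<bar>\<epsilon>\<bar> * rr p \<le> 1/4" "q \<in> DD" "\<bar>\<epsilon>\<bar> * rr q \<le> 1/4"
    and eq: "Phi2 \<epsilon> p = Phi2 \<epsilon> q"
  shows "p = q"
proof -
  note bp = basic[OF assms(1,2)] and bq = basic[OF assms(3,4)]
  note gp = good[OF assms(1,2)] and gq = good[OF assms(3,4)]
  have "uu p / (1 + \<epsilon> * uu p) = uu q / (1 + \<epsilon> * uu q)"
    using gp(5) gq(5) eq by metis
  then have u: "uu p = uu q" by (rule cancel_u[OF bp(6) bq(6)])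
  have "vv p / (1 - \<epsilon> * vv p) = vv q / (1 - \<epsilon> * vv q)"
    using gp(6) gq(6) eq by metis
  then have "vv p / (1 + (-\<epsilon>) * vv p) = vv q / (1 + (-\<epsilon>) * vv q)" by simp
  moreover have "1 + (-\<epsilon>) * vv p > 0" "1 + (-\<epsilon>) * vv q > 0" using bp(7) bq(7) by simp_all
  ultimately have v: "vv p = vv q" using cancel_u by blast
  have tp: "tau p = uu p + vv p" "tau q = uu q + vv q" by (simp_all add: uu_def vv_def field_simps)
  have rp: "rr p = vv p - uu p" "rr q = vv q - uu q" by (simp_all add: uu_def vv_def field_simps)
  have t: "tau p = tau q" unfolding tp u v ..
  have r: "rr p = rr q" unfolding rp u v ..
  have x: "xi \<epsilon> p = xi \<epsilon> q" using u v by (simp add: xi_def)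
  have f: "ff p = ff q" using u v by (simp add: ff_def)
  have k1: "k1 \<epsilon> p = k1 \<epsilon> q" using x by (simp add: k1_def)
  have k2: "k2 \<epsilon> p = k2 \<epsilon> q" using x r f by (simp add: k2_def HH_def)
  have k1p: "k1 \<epsilon> p \<noteq> 0" using bp by (simp add: k1_def)
  have k2p: "k2 \<epsilon> p \<noteq> 0" using bp by (simp add: k2_def)
  have "fst p = fst q" using eq k1 k1p by (simp add: Phi2_def)
  moreover have "snd p = snd q" using eq k2 k2p by (simp add: Phi2_def)
  ultimately show ?thesis by (simp add: prod_eq_iff)
qed

theorem proposition3p8:
  shows "\<exists>c::real. c > 0 \<and>
    (\<forall>(R::real) (\<epsilon>::real). R > 0 \<longrightarrow> \<bar>\<epsilon>\<bar> \<le> c / R \<longrightarrow>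
      (let S = (DD :: ('m::finite, 'n::finite) pt set) \<inter> {p. rr p < R} in
        (\<forall>p\<in>S. tau (Phibar \<epsilon> p) = tau p / xi \<epsilon> p) \<and>
        (\<forall>p\<in>S. ff (Phibar \<epsilon> p) = ff p / xi \<epsilon> p) \<and>
        (\<forall>p\<in>S. rhobar \<epsilon> (Phibar \<epsilon> p) = rr p / xi \<epsilon> p) \<and>
        Phibar \<epsilon> ` S \<subseteq> DD \<and>
        open (Phibar \<epsilon> ` S) \<and>
        inj_on (Phibar \<epsilon>) S \<and>
        (\<forall>p\<in>S. \<exists>\<Phi>'. (Phibar \<epsilon> has_derivative \<Phi>') (at p) \<and>
           (\<forall>w w'. gbar \<epsilon> (Phibar \<epsilon> p) (\<Phi>' w) (\<Phi>' w')
                    = gmink w w' / (xi \<epsilon> p)\<^sup>2))))"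
proof (intro exI[of _ "1/4"] conjI allI impI)
  show "(0::real) < 1/4" by simp
  fix R \<epsilon> :: real
  assume R: "R > 0" and e: "\<bar>\<epsilon>\<bar> \<le> (1/4) / R"
  define S where "S = (DD :: ('m::finite, 'n::finite) pt set) \<inter> {p. rr p < R}"
  have hp: "p \<in> DD \<and> \<bar>\<epsilon>\<bar> * rr p \<le> 1/4" if "p \<in> S" for p
  proof -
    have r0: "0 \<le> rr p" by (simp add: rr_def)
    have "rr p < R" using that by (simp add: S_def)
    have "\<bar>\<epsilon>\<bar> * rr p \<le> ((1/4) / R) * rr p" using e r0 by (rule mult_right_mono)
    also have "\<dots> \<le> ((1/4) / R) * R" using \<open>rr p < R\<close> R by (intro mult_left_mono) auto
    also have "\<dots> = 1/4" using R by simp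
    finally show ?thesis using that by (simp add: S_def)
  qed
  have eqS: "Phibar \<epsilon> p = Phi2 \<epsilon> p" if "p \<in> S" for p
    using hp[OF that] by (intro good(1)) auto
  have openS: "open S"
  proof -
    have c1: "continuous_on UNIV (ff :: ('m, 'n) pt \<Rightarrow> real)"
      unfolding ff_eq[abs_def] by (intro continuous_intros) auto
    have c2: "continuous_on UNIV (rr :: ('m, 'n) pt \<Rightarrow> real)"
      unfolding rr_def[abs_def] by (intro continuous_intros)
    have "open {p. (0::real) < ff (p :: ('m, 'n) pt)}"
      by (rule open_Collect_less[OF continuous_on_const c1])
    moreover have "open {p. rr (p :: ('m, 'n) pt) < R}"
      by (rule open_Collect_less[OF c2 continuous_on_const])
    ultimately show ?thesis unfolding S_def DD_def by (rule open_Int)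
  qed
  have deriv: "(Phibar \<epsilon> has_derivative DPhi \<epsilon> p) (at p)" if "p \<in> S" for p
  proof -
    note b = basic[OF conjunct1[OF hp[OF that]] conjunct2[OF hp[OF that]]]
    have "(Phi2 \<epsilon> has_derivative DPhi \<epsilon> p) (at p)"
      using b by (intro D_Phi2) auto
    then show ?thesis
      by (rule has_derivative_transform_within_open[OF _ openS that]) (simp add: eqS)
  qed
  have injS: "inj_on (Phibar \<epsilon>) S"
  proof (rule inj_onI)
    fix p q assume p: "p \<in> S" and q: "q \<in> S" and "Phibar \<epsilon> p = Phibar \<epsilon> q"
    then have "Phi2 \<epsilon> p = Phi2 \<epsilon> q" using eqS by simp
    then show "p = q"
      by (rule inj_good[OF conjunct1[OF hp[OF p]] conjunct2[OF hp[OF p]] conjunct1[OF hp[OF q]] conjunct2[OF hp[OF q]]])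
  qed
  have contS: "continuous_on S (Phibar \<epsilon>)"
    by (rule has_derivative_continuous_on[of S _ "DPhi \<epsilon>"], rule has_derivative_at_withinI, erule deriv)
  show "let S = (DD :: ('m::finite, 'n::finite) pt set) \<inter> {p. rr p < R} in
        (\<forall>p\<in>S. tau (Phibar \<epsilon> p) = tau p / xi \<epsilon> p) \<and>
        (\<forall>p\<in>S. ff (Phibar \<epsilon> p) = ff p / xi \<epsilon> p) \<and>
        (\<forall>p\<in>S. rhobar \<epsilon> (Phibar \<epsilon> p) = rr p / xi \<epsilon> p) \<and>
        Phibar \<epsilon> ` S \<subseteq> DD \<and>
        open (Phibar \<epsilon> ` S) \<and>
        inj_on (Phibar \<epsilon>) S \<and>
        (\<forall>p\<in>S. \<exists>\<Phi>'. (Phibar \<epsilon> has_derivative \<Phi>') (at p) \<and>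
           (\<forall>w w'. gbar \<epsilon> (Phibar \<epsilon> p) (\<Phi>' w) (\<Phi>' w')
                    = gmink w w' / (xi \<epsilon> p)\<^sup>2))"
    unfolding Let_def S_def[symmetric]
  proof (intro conjI ballI)
    fix p assume p: "p \<in> S"
    note h = conjunct1[OF hp[OF p]] conjunct2[OF hp[OF p]]
    show "tau (Phibar \<epsilon> p) = tau p / xi \<epsilon> p" using good(1,2)[OF h] by simp
    show "ff (Phibar \<epsilon> p) = ff p / xi \<epsilon> p" using good(1,4)[OF h] by simp
    show "rhobar \<epsilon> (Phibar \<epsilon> p) = rr p / xi \<epsilon> p" using good(1)[OF h] rho_good[OF h] by simp
    show "\<exists>\<Phi>'. (Phibar \<epsilon> has_derivative \<Phi>') (at p) \<and>
           (\<forall>w w'. gbar \<epsilon> (Phibar \<epsilon> p) (\<Phi>' w) (\<Phi>' w') = gmink w w' / (xi \<epsilon> p)\<^sup>2)"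
    proof (intro exI conjI allI)
      show "(Phibar \<epsilon> has_derivative DPhi \<epsilon> p) (at p)" by (rule deriv[OF p])
      fix w w'
      show "gbar \<epsilon> (Phibar \<epsilon> p) (DPhi \<epsilon> p w) (DPhi \<epsilon> p w') = gmink w w' / (xi \<epsilon> p)\<^sup>2"
        unfolding good(1)[OF h] by (rule metric[OF h])
    qed
  next
    show "Phibar \<epsilon> ` S \<subseteq> DD"
    proof
      fix y assume "y \<in> Phibar \<epsilon> ` S"
      then obtain p where p: "p \<in> S" and y: "y = Phibar \<epsilon> p" by blast
      note h = conjunct1[OF hp[OF p]] conjunct2[OF hp[OF p]]
      have "ff y = ff p / xi \<epsilon> p" using good(1,4)[OF h] y by simp
      moreover have "ff p > 0" "xi \<epsilon> p > 0" using basic[OF h] by auto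
      ultimately show "y \<in> DD" by (simp add: DD_def)
    qed
  next
    show "open (Phibar \<epsilon> ` S)" using contS openS injS by (rule invariance_of_domain)
  next
    show "inj_on (Phibar \<epsilon>) S" by (rule injS)
  qed
qed

end
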